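(* There exists a context-free monoid none of whose maximal subgroups is finitely generated. *)

theory Defs
  imports "HOL-Algebra.Generated_Groups"
begin

inductive cfg_derives :: "(nat \<times> (nat + 't) list) set \<Rightarrow> (nat + 't) list \<Rightarrow> (nat + 't) list \<Rightarrow> bool"
  for P where
  refl: "cfg_derives P u u"
| step: "cfg_derives P u (\<alpha> @ [Inl A] @ \<beta>) \<Longrightarrow> (A, \<gamma>) \<in> P \<Longrightarrow> cfg_derives P u (\<alpha> @ \<gamma> @ \<beta>)"

definition context_free :: "'t list set \<Rightarrow> bool" where
  "context_free L \<longleftrightarrow>
     (\<exists>(P :: (nat \<times> (nat + 't) list) set) S. finite P \<and>
        L = {w. cfg_derives P [Inl S] (map Inr w)})"

definition eval_word :: "('a, 'b) monoid_scheme \<Rightarrow> 'a list \<Rightarrow> 'a" where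
  "eval_word M w = foldr (\<lambda>x y. x \<otimes>\<^bsub>M\<^esub> y) w \<one>\<^bsub>M\<^esub>"

text \<open>The word problem w.r.t. the finite generating set A is
  { u # v^rev : u =_M v }, with the marker # encoded as None.\<close>

definition word_problem :: "('a, 'b) monoid_scheme \<Rightarrow> 'a set \<Rightarrow> 'a option list set" where
  "word_problem M A =
     {map Some u @ [None] @ rev (map Some v) | u v.
        set u \<subseteq> A \<and> set v \<subseteq> A \<and> eval_word M u = eval_word M v}"

definition context_free_monoid :: "('a, 'b) monoid_scheme \<Rightarrow> bool" where
  "context_free_monoid M \<longleftrightarrow> monoid M \<and>
     (\<exists>A. finite A \<and> A \<subseteq> carrier M \<and>
        (\<forall>x\<in>carrier M. \<exists>w. set w \<subseteq> A \<and> eval_word M w = x) \<and>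
        context_free (word_problem M A))"

text \<open>The maximal subgroup of M at the idempotent e: the group of units of eMe
  (equivalently the H-class of e), with identity e.\<close>

definition max_subgroup :: "('a, 'b) monoid_scheme \<Rightarrow> 'a \<Rightarrow> 'a monoid" where
  "max_subgroup M e =
     \<lparr> carrier = {x \<in> carrier M. e \<otimes>\<^bsub>M\<^esub> x = x \<and> x \<otimes>\<^bsub>M\<^esub> e = x \<and>
                    (\<exists>y\<in>carrier M. e \<otimes>\<^bsub>M\<^esub> y = y \<and> y \<otimes>\<^bsub>M\<^esub> e = y \<and>
                       x \<otimes>\<^bsub>M\<^esub> y = e \<and> y \<otimes>\<^bsub>M\<^esub> x = e)},
       mult = mult M, one = e \<rparr>"

definition finitely_generated_group :: "('a, 'b) monoid_scheme \<Rightarrow> bool" where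
  "finitely_generated_group G \<longleftrightarrow>
     (\<exists>S. finite S \<and> S \<subseteq> carrier G \<and> generate G S = carrier G)"

end

theory Submission
  imports Defs "HOL-Library.Countable"
begin

datatype lt = P | Q | A

instance lt :: countable by countable_datatype

definition rl :: "lt list \<Rightarrow> nat" where "rl s = length (takeWhile (\<lambda>x. x = A) s)"
definition pat :: "nat \<Rightarrow> lt list" where "pat n = replicate n A @ [P, Q] @ replicate n A @ [P]"
definition relpat :: "lt list \<Rightarrow> bool" where "relpat s \<longleftrightarrow> take (2 * rl s + 3) s = pat (rl s)"
definition st :: "lt list \<Rightarrow> lt \<Rightarrow> lt list" where
  "st s x = (if x = Q \<and> relpat s then drop (2 * rl s + 3) s else x # s)"

lemma rl_rep: "rl (replicate n A @ P # s) = n"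
  unfolding rl_def by (induction n) auto

lemma len_pat[simp]: "length (pat n) = 2 * n + 3" unfolding pat_def by simp

lemma rl_pat: "rl (pat n @ t) = n"
  unfolding pat_def using rl_rep[of n "[Q] @ replicate n A @ [P] @ t"] by simp

lemma relpat_iff: "relpat s \<longleftrightarrow> (\<exists>n t. s = pat n @ t)"
proof
  assume "relpat s"
  then have "s = pat (rl s) @ drop (2 * rl s + 3) s"
    unfolding relpat_def by (metis append_take_drop_id)
  then show "\<exists>n t. s = pat n @ t" by blast
next
  assume "\<exists>n t. s = pat n @ t"
  then obtain n t where "s = pat n @ t" by blast
  then show "relpat s" unfolding relpat_def using rl_pat[of n t]
    by (metis append_eq_conv_conj len_pat)
qed

lemma st_pat: "st (pat n @ t) Q = t"
  unfolding st_def using rl_pat[of n t] relpat_iff by auto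

lemma st_push: "\<not> (x = Q \<and> (\<exists>n t. s = pat n @ t)) \<Longrightarrow> st s x = x # s"
  unfolding st_def using relpat_iff by auto

definition redpat :: "lt list \<Rightarrow> bool" where "redpat t \<longleftrightarrow> (\<exists>n r. t = Q # pat n @ r)"
definition valid :: "lt list \<Rightarrow> bool" where "valid s \<longleftrightarrow> (\<forall>k. \<not> redpat (drop k s))"

lemma valid_drop: "valid s \<Longrightarrow> valid (drop k s)"
  unfolding valid_def by (simp add: add.commute)

lemma valid_take: "valid s \<Longrightarrow> valid (take k s)"
  unfolding valid_def redpat_def
proof (intro allI notI)
  fix j assume v: "\<forall>k. \<not> (\<exists>n r. drop k s = Q # pat n @ r)"
    and "\<exists>n r. drop j (take k s) = Q # pat n @ r"
  then obtain n r where e: "drop j (take k s) = Q # pat n @ r" by blast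
  have "drop j s = drop j (take k s) @ drop (j - length (take k s)) (drop k s)"
    by (metis append_take_drop_id drop_append)
  then have "drop j s = Q # pat n @ (r @ drop (j - length (take k s)) (drop k s))" using e by simp
  with v show False by blast
qed

lemma valid_Nil[simp]: "valid []" unfolding valid_def redpat_def by simp

lemma valid_cons: "valid (x # s) \<longleftrightarrow> valid s \<and> \<not> redpat (x # s)"
  unfolding valid_def
proof safe
  fix k assume "\<forall>k. \<not> redpat (drop k (x # s))" "redpat (drop k s)"
  then show False by (metis drop_Suc_Cons)
next
  assume "\<forall>k. \<not> redpat (drop k (x # s))" "redpat (x # s)"
  then show False by (metis drop0)
next
  fix k assume "\<forall>k. \<not> redpat (drop k s)" "\<not> redpat (x # s)" "redpat (drop k (x # s))"
  then show False by (cases k) auto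
qed

lemma valid_st: "valid s \<Longrightarrow> valid (st s x)"
proof (cases "x = Q \<and> (\<exists>n t. s = pat n @ t)")
  case True
  then obtain n t where "s = pat n @ t" "x = Q" by blast
  then have "st s x = drop (length (pat n)) s" using st_pat by simp
  then show "valid s \<Longrightarrow> valid (st s x)" using valid_drop by simp
next
  case False
  then have "st s x = x # s" by (rule st_push)
  moreover have "\<not> redpat (x # s)" using False unfolding redpat_def by auto
  ultimately show "valid s \<Longrightarrow> valid (st s x)" using valid_cons by simp
qed

lemma valid_foldl: "valid s \<Longrightarrow> valid (foldl st s w)"
  by (induction w arbitrary: s) (auto simp: valid_st)

lemma st_valid_push: "valid (x # s) \<Longrightarrow> st s x = x # s"
  using valid_cons[of x s] unfolding redpat_def by (metis st_push)

lemma foldl_valid_push: "valid (rev w @ s) \<Longrightarrow> foldl st s w = rev w @ s"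
proof (induction w arbitrary: s)
  case (Cons x w)
  have "valid (x # s)" using Cons.prems valid_drop[of "rev w @ x # s" "length w"] by simp
  then have "st s x = x # s" by (rule st_valid_push)
  then show ?case using Cons by simp
qed simp

lemma foldl_rep_A: "foldl st s (replicate n A) = replicate n A @ s"
  by (induction n arbitrary: s) (auto simp: st_def replicate_append_same[symmetric])

lemma rev_rel: "rev (Q # pat n) = P # replicate n A @ Q # P # replicate n A @ [Q]"
  unfolding pat_def by simp

lemma pat_prefix_iff: "(\<exists>m t. replicate n A @ P # s = pat m @ t) \<longleftrightarrow> (\<exists>t. s = Q # replicate n A @ P # t)"
proof
  assume "\<exists>m t. replicate n A @ P # s = pat m @ t"
  then obtain m t where e: "replicate n A @ P # s = pat m @ t" by blast
  have "m = n" using arg_cong[OF e, of rl] rl_rep rl_pat by simp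
  then show "\<exists>t. s = Q # replicate n A @ P # t" using e unfolding pat_def by auto
next
  assume "\<exists>t. s = Q # replicate n A @ P # t"
  then obtain t where "s = Q # replicate n A @ P # t" by blast
  then have "replicate n A @ P # s = pat n @ t" unfolding pat_def by simp
  then show "\<exists>m t. replicate n A @ P # s = pat m @ t" by blast
qed

lemma K2: "valid s \<Longrightarrow> foldl st s (rev (Q # pat n)) = s"
proof -
  assume v: "valid s"
  have f1: "foldl st s (P # replicate n A) = replicate n A @ P # s"
    by (simp add: foldl_rep_A st_def)
  show ?thesis
  proof (cases "\<exists>t. s = Q # replicate n A @ P # t")
    case True
    then obtain s' where s': "s = Q # replicate n A @ P # s'" by blast
    have a: "st (replicate n A @ P # s) Q = s'"
      using st_pat[of n s'] s' unfolding pat_def by simp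
    have f2: "foldl st s' (P # replicate n A) = replicate n A @ P # s'"
      by (simp add: foldl_rep_A st_def)
    have "\<not> (\<exists>t. s' = Q # replicate n A @ P # t)"
    proof
      assume "\<exists>t. s' = Q # replicate n A @ P # t"
      then obtain t where "s' = Q # replicate n A @ P # t" by blast
      then have "redpat s" using s' unfolding redpat_def pat_def by auto
      with v show False unfolding valid_def by (metis drop0)
    qed
    then have b: "st (replicate n A @ P # s') Q = Q # replicate n A @ P # s'"
      using pat_prefix_iff st_push by blast
    show ?thesis unfolding rev_rel using f1 f2 a b s'
      by (simp only: foldl_append foldl_Cons foldl_Nil append_Cons[symmetric])
  next
    case False
    then have b: "st (replicate n A @ P # s) Q = Q # replicate n A @ P # s"
      using pat_prefix_iff st_push by blast
    have f3: "foldl st (Q # replicate n A @ P # s) (P # replicate n A) = pat n @ s"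
      by (simp add: foldl_rep_A st_def pat_def)
    show ?thesis unfolding rev_rel using f1 f3 b st_pat[of n s]
      by (simp only: foldl_append foldl_Cons foldl_Nil append_Cons[symmetric])
  qed
qed

lemma st_foldl_rev: "foldl st s (rev (st T x)) = st (foldl st s (rev T)) x" if "valid s"
proof (cases "x = Q \<and> (\<exists>n t. T = pat n @ t)")
  case True
  then obtain n t where T: "T = pat n @ t" and x: "x = Q" by blast
  have v: "valid (foldl st s (rev t))" using that valid_foldl by blast
  have "st (foldl st s (rev T)) x = foldl st (foldl st s (rev t)) (rev (Q # pat n))"
    using T x by simp
  also have "\<dots> = foldl st s (rev t)" using K2[OF v] .
  finally show ?thesis using T x st_pat by simp
next
  case False
  then show ?thesis using st_push[OF False] by simp
qed

lemma NF: "valid s \<Longrightarrow> foldl st s (rev (foldl st t w)) = foldl st s (rev t @ w)"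
proof (induction w rule: rev_induct)
  case (snoc x w)
  have "foldl st s (rev (foldl st t (w @ [x]))) = st (foldl st s (rev (foldl st t w))) x"
    using st_foldl_rev[OF snoc.prems] by simp
  then show ?case using snoc by simp
qed simp

definition Mn :: "nat monoid" where
  "Mn = \<lparr> carrier = to_nat ` {s :: lt list. valid s},
          mult = (\<lambda>x y. to_nat (foldl st (from_nat x :: lt list) (rev (from_nat y)))),
          one = to_nat ([] :: lt list) \<rparr>"

lemma Mn_carrier: "carrier Mn = to_nat ` {s :: lt list. valid s}" by (simp add: Mn_def)
lemma Mn_mult: "x \<otimes>\<^bsub>Mn\<^esub> y = to_nat (foldl st (from_nat x :: lt list) (rev (from_nat y)))" by (simp add: Mn_def)
lemma Mn_one: "\<one>\<^bsub>Mn\<^esub> = to_nat ([] :: lt list)" by (simp add: Mn_def)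

lemma Mn_mult_to: "to_nat (s::lt list) \<otimes>\<^bsub>Mn\<^esub> to_nat t = to_nat (foldl st s (rev t))"
  by (simp add: Mn_mult)

lemma foldl_rev_valid: "valid s \<Longrightarrow> foldl st [] (rev s) = s"
  using foldl_valid_push[of "rev s" "[]"] by simp

lemma monoid_Mn: "monoid Mn"
proof
  fix x y assume "x \<in> carrier Mn" "y \<in> carrier Mn"
  then show "x \<otimes>\<^bsub>Mn\<^esub> y \<in> carrier Mn"
    by (auto simp: Mn_carrier Mn_mult intro!: valid_foldl)
next
  show "\<one>\<^bsub>Mn\<^esub> \<in> carrier Mn" by (auto simp: Mn_carrier Mn_one)
next
  fix x y z assume "x \<in> carrier Mn" "y \<in> carrier Mn" "z \<in> carrier Mn"
  then obtain a b c where abc: "x = to_nat a" "y = to_nat b" "z = to_nat c" "valid a" "valid b" "valid c"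
    by (auto simp: Mn_carrier)
  show "x \<otimes>\<^bsub>Mn\<^esub> y \<otimes>\<^bsub>Mn\<^esub> z = x \<otimes>\<^bsub>Mn\<^esub> (y \<otimes>\<^bsub>Mn\<^esub> z)"
    using abc by (simp add: Mn_mult_to NF)
next
  fix x assume "x \<in> carrier Mn"
  then obtain a where "x = to_nat a" "valid a" by (auto simp: Mn_carrier)
  then show "\<one>\<^bsub>Mn\<^esub> \<otimes>\<^bsub>Mn\<^esub> x = x" "x \<otimes>\<^bsub>Mn\<^esub> \<one>\<^bsub>Mn\<^esub> = x"
    by (simp_all add: Mn_one Mn_mult_to foldl_rev_valid)
qed

definition lc :: "lt \<Rightarrow> nat" where "lc x = to_nat [x]"

lemma valid_single: "valid [x]"
  unfolding valid_def redpat_def by (auto simp: drop_Cons' pat_def)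

lemma st_Nil: "st [] x = [x]"
  using st_valid_push[OF valid_single] .

lemma eval_lc: "eval_word Mn (map lc w) = to_nat (foldl st [] w)"
proof (induction w)
  case Nil then show ?case by (simp add: eval_word_def Mn_one)
next
  case (Cons x w)
  have "eval_word Mn (map lc (x # w)) = lc x \<otimes>\<^bsub>Mn\<^esub> eval_word Mn (map lc w)"
    by (simp add: eval_word_def)
  also have "\<dots> = to_nat (foldl st [x] (rev (foldl st [] w)))"
    by (simp only: Cons.IH lc_def Mn_mult_to)
  also have "\<dots> = to_nat (foldl st [x] w)" using NF[of "[x]" "[]" w] valid_single by simp
  finally show ?case by (simp add: st_Nil)
qed

lemma gen_Mn: "x \<in> carrier Mn \<Longrightarrow> \<exists>w. set w \<subseteq> lc ` UNIV \<and> eval_word Mn w = x"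
proof -
  assume "x \<in> carrier Mn"
  then obtain s where "x = to_nat s" "valid s" by (auto simp: Mn_carrier)
  then have "eval_word Mn (map lc (rev s)) = x" by (simp add: eval_lc foldl_rev_valid)
  then show ?thesis by (intro exI[of _ "map lc (rev s)"]) auto
qed

lemma st_frame: "length b \<le> length (st (t @ b) x) \<Longrightarrow> st (t @ b) x = st t x @ b"
proof (cases "x = Q \<and> (\<exists>n r. t @ b = pat n @ r)")
  case True
  then obtain n r where e: "t @ b = pat n @ r" and x: "x = Q" by blast
  assume "length b \<le> length (st (t @ b) x)"
  then have "length b \<le> length r" using e x st_pat by simp
  then have "length (pat n) \<le> length t" using arg_cong[OF e, of length] by simp
  then have "take (length (pat n)) t = pat n"
    using arg_cong[OF e, of "take (length (pat n))"] by simp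
  then obtain r' where t: "t = pat n @ r'"
    by (metis append_take_drop_id)
  then have "r = r' @ b" using e by simp
  then show ?thesis using t e x st_pat by simp
next
  case False
  then have "st (t @ b) x = x # t @ b" by (rule st_push)
  moreover have "st t x = x # t" using False by (intro st_push) (metis append.assoc)
  ultimately show ?thesis by simp
qed

lemma frame: "\<forall>k\<le>length w. length b \<le> length (foldl st (t @ b) (take k w))
  \<Longrightarrow> foldl st (t @ b) w = foldl st t w @ b"
proof (induction w arbitrary: t)
  case (Cons x w)
  have "length b \<le> length (st (t @ b) x)" using Cons.prems[rule_format, of 1] by simp
  then have e: "st (t @ b) x = st t x @ b" by (rule st_frame)
  have "\<forall>k\<le>length w. length b \<le> length (foldl st (st t x @ b) (take k w))"
  proof (intro allI impI)
    fix k assume "k \<le> length w"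
    then show "length b \<le> length (foldl st (st t x @ b) (take k w))"
      using Cons.prems[rule_format, of "Suc k"] e by simp
  qed
  then show ?case using Cons.IH e by simp
qed simp

inductive Zs and Ws where
  Z0: "Zs []"
| Zc: "Zs u \<Longrightarrow> Zs v \<Longrightarrow> Zs (u @ v)"
| Zr: "Ws w \<Longrightarrow> Zs (P # w @ [Q])"
| W0: "Zs z1 \<Longrightarrow> Zs z2 \<Longrightarrow> Zs z3 \<Longrightarrow> Ws (z1 @ Q # z2 @ P # z3)"
| Wn: "Zs z1 \<Longrightarrow> Ws w \<Longrightarrow> Zs z2 \<Longrightarrow> Ws (z1 @ A # w @ A # z2)"

lemma st_A[simp]: "st s A = A # s" by (simp add: st_def)
lemma st_P[simp]: "st s P = P # s" by (simp add: st_def)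

lemma Zs_Ws_sound:
  shows "Zs z \<Longrightarrow> (\<forall>s. valid s \<longrightarrow> foldl st s z = s)"
    and "Ws w \<Longrightarrow> (\<exists>n. \<forall>s. valid s \<longrightarrow> foldl st s w = foldl st s (replicate n A @ Q # P # replicate n A))"
proof (induction rule: Zs_Ws.inducts)
  case Z0 then show ?case by simp
next
  case (Zc u v) then show ?case using valid_foldl by simp
next
  case (Zr w)
  then obtain n where h: "\<And>s. valid s \<Longrightarrow> foldl st s w = foldl st s (replicate n A @ Q # P # replicate n A)" by blast
  show ?case
  proof (intro allI impI)
    fix s assume v: "valid s"
    have vp: "valid (st s P)" using valid_st[OF v] .
    have "foldl st s (P # w @ [Q]) = st (foldl st (st s P) w) Q" by simp
    also have "\<dots> = st (foldl st (st s P) (replicate n A @ Q # P # replicate n A)) Q" using h[OF vp] by simp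
    also have "\<dots> = foldl st s (rev (Q # pat n))" by (simp only: rev_rel foldl_Cons foldl_append foldl_Nil)
    also have "\<dots> = s" using K2[OF v] .
    finally show "foldl st s (P # w @ [Q]) = s" .
  qed
next
  case (W0 z1 z2 z3)
  show ?case
  proof (intro exI[of _ 0] allI impI)
    fix s assume v: "valid s"
    have v1: "valid (st s Q)" using valid_st[OF v] .
    have v2: "valid (st (st s Q) P)" using valid_st[OF v1] .
    show "foldl st s (z1 @ Q # z2 @ P # z3) = foldl st s (replicate 0 A @ Q # P # replicate 0 A)"
      using W0 v v1 v2 by simp
  qed
next
  case (Wn z1 w z2)
  then obtain n where h: "\<And>s. valid s \<Longrightarrow> foldl st s w = foldl st s (replicate n A @ Q # P # replicate n A)" by blast
  show ?case
  proof (intro exI[of _ "Suc n"] allI impI)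
    fix s assume v: "valid s"
    have v1: "valid (st s A)" using valid_st[OF v] .
    have v2: "valid (foldl st (st s A) w)" using valid_foldl[OF v1] .
    have v3: "valid (st (foldl st (st s A) w) A)" using valid_st[OF v2] .
    have "foldl st s (z1 @ A # w @ A # z2) = st (foldl st (st s A) w) A"
      using Wn v v1 v2 v3 by simp
    also have "\<dots> = foldl st s (A # (replicate n A @ Q # P # replicate n A) @ [A])"
      using h[OF v1] by simp
    also have "\<dots> = foldl st s (replicate (Suc n) A @ Q # P # replicate (Suc n) A)"
      by (rule arg_cong[where f="foldl st s"]) (simp add: replicate_append_same)
    finally show "foldl st s (z1 @ A # w @ A # z2) = foldl st s (replicate (Suc n) A @ Q # P # replicate (Suc n) A)" .
  qed
qed

lemma Zs_id: "Zs z \<Longrightarrow> valid s \<Longrightarrow> foldl st s z = s"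
  using Zs_Ws_sound by blast

inductive dec :: "lt list \<Rightarrow> lt list \<Rightarrow> bool" where
  d0: "Zs z \<Longrightarrow> dec z []"
| ds: "dec U cs \<Longrightarrow> Zs z \<Longrightarrow> dec (U @ c # z) (cs @ [c])"

lemma dec_snocE: "dec U (cs @ [c]) \<Longrightarrow> \<exists>U' z. U = U' @ c # z \<and> dec U' cs \<and> Zs z"
  by (cases rule: dec.cases) auto

lemma dec_NilE: "dec U [] \<Longrightarrow> Zs U"
  by (cases rule: dec.cases) auto

lemma dec_append: "dec U (cs1 @ c # cs2) \<Longrightarrow> \<exists>U1 U2. U = U1 @ c # U2 \<and> dec U1 cs1 \<and> dec U2 cs2"
proof (induction cs2 arbitrary: U rule: rev_induct)
  case Nil
  then obtain U' z where "U = U' @ c # z" "dec U' cs1" "Zs z" using dec_snocE[of U cs1 c] by auto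
  then show ?case using d0 by blast
next
  case (snoc d cs2)
  then obtain U' z where u: "U = U' @ d # z" "dec U' (cs1 @ c # cs2)" "Zs z"
    using dec_snocE[of U "cs1 @ c # cs2" d] by auto
  then obtain U1 U2 where "U' = U1 @ c # U2" "dec U1 cs1" "dec U2 cs2" using snoc.IH by blast
  then show ?case using u ds[of U2 cs2 z d] by auto
qed

lemma dec_consE: "dec U (c # cs) \<Longrightarrow> \<exists>z U'. U = z @ c # U' \<and> Zs z \<and> dec U' cs"
  using dec_append[of U "[]" c cs] dec_NilE by auto

lemma dec_ext: "dec U cs \<Longrightarrow> Zs y \<Longrightarrow> dec (U @ y) cs"
  by (induction rule: dec.induct) (auto intro: dec.intros Zs_Ws.intros)

lemma dec_cons_intro: "dec U cs \<Longrightarrow> Zs z \<Longrightarrow> dec (z @ c # U) (c # cs)"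
proof (induction rule: dec.induct)
  case (d0 z')
  then show ?case using ds[OF dec.d0[OF d0.prems] d0.hyps, of c] by simp
next
  case (ds U cs z' d)
  then show ?case using dec.ds[OF ds.IH[OF ds.prems] ds.hyps(2), of d] by simp
qed

lemma dec_Ws: "dec V (replicate n A @ Q # P # replicate n A) \<Longrightarrow> Ws V"
proof (induction n arbitrary: V)
  case 0
  then obtain z1 V' where a: "V = z1 @ Q # V'" "Zs z1" "dec V' [P]"
    using dec_consE[of V Q "[P]"] by auto
  then obtain z2 z3 where "V' = z2 @ P # z3" "Zs z2" "Zs z3"
    using dec_consE[of V' P "[]"] dec_NilE by blast
  then show ?case using a W0 by auto
next
  case (Suc n)
  have e: "replicate (Suc n) A @ Q # P # replicate (Suc n) A = A # ((replicate n A @ Q # P # replicate n A) @ [A])"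
    by (simp add: replicate_append_same[symmetric])
  obtain z1 V' where a: "V = z1 @ A # V'" "Zs z1"
    "dec V' ((replicate n A @ Q # P # replicate n A) @ [A])"
    using dec_consE[of V A] Suc.prems unfolding e by blast
  then obtain V'' z2 where b: "V' = V'' @ A # z2" "dec V'' (replicate n A @ Q # P # replicate n A)" "Zs z2"
    using dec_snocE by blast
  then show ?case using a Suc.IH Wn by auto
qed

lemma dec_red: "dec U (rev (foldl st [] U))"
proof (induction U rule: rev_induct)
  case Nil then show ?case using d0 Z0 by auto
next
  case (snoc x U)
  let ?T = "foldl st [] U"
  show ?case
  proof (cases "x = Q \<and> (\<exists>n t. ?T = pat n @ t)")
    case True
    then obtain n t where T: "?T = pat n @ t" and x: "x = Q" by blast
    have "rev ?T = rev t @ P # (replicate n A @ Q # P # replicate n A)"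
      unfolding T pat_def by simp
    then obtain U1 V where u: "U = U1 @ P # V" "dec U1 (rev t)" "dec V (replicate n A @ Q # P # replicate n A)"
      using dec_append snoc.IH by metis
    have "Zs (P # V @ [Q])" using dec_Ws[OF u(3)] Zr by blast
    then have "dec (U1 @ P # V @ [Q]) (rev t)" using dec_ext[OF u(2)] by simp
    then show ?thesis using T x u st_pat by simp
  next
    case False
    then show ?thesis using st_push[OF False] ds[OF snoc.IH Z0, of x] by simp
  qed
qed

lemma dec_foldl: "dec U cs \<Longrightarrow> valid s \<Longrightarrow> foldl st s U = foldl st s cs"
proof (induction arbitrary: s rule: dec.induct)
  case (d0 z) then show ?case using Zs_id by simp
next
  case (ds U cs z c)
  have "valid (st (foldl st s U) c)" using valid_st valid_foldl ds.prems by blast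
  then show ?case using ds Zs_id by simp
qed

lemma red_eq_iff: "foldl st [] U = foldl st [] V \<longleftrightarrow> (\<exists>cs. dec U cs \<and> dec V cs)"
proof
  assume "foldl st [] U = foldl st [] V"
  then show "\<exists>cs. dec U cs \<and> dec V cs" using dec_red[of U] dec_red[of V] by metis
next
  assume "\<exists>cs. dec U cs \<and> dec V cs"
  then show "foldl st [] U = foldl st [] V" using dec_foldl by fastforce
qed

section \<open>Generic grammar lemmas\<close>

lemma cfg_trans: "cfg_derives G v w \<Longrightarrow> cfg_derives G u v \<Longrightarrow> cfg_derives G u w"
  by (induction rule: cfg_derives.induct) (auto intro: cfg_derives.step)

lemma cfg_ctx: "cfg_derives G u v \<Longrightarrow> cfg_derives G (x @ u @ y) (x @ v @ y)"
proof (induction rule: cfg_derives.induct)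
  case refl then show ?case by (rule cfg_derives.refl)
next
  case (step u0 \<alpha> B \<beta> \<gamma>)
  then show ?case using cfg_derives.step[of G "x @ u0 @ y" "x @ \<alpha>" B "\<beta> @ y" \<gamma>] by simp
qed

lemma cfg_app: "cfg_derives G u u' \<Longrightarrow> cfg_derives G v v' \<Longrightarrow> cfg_derives G (u @ v) (u' @ v')"
proof -
  assume a: "cfg_derives G u u'" and b: "cfg_derives G v v'"
  have "cfg_derives G (u @ v) (u' @ v)" using cfg_ctx[OF a, where x="[]" and y=v] by simp
  moreover have "cfg_derives G (u' @ v) (u' @ v')" using cfg_ctx[OF b, where x=u' and y="[]"] by simp
  ultimately show ?thesis using cfg_trans by blast
qed

lemma cfg_prod: "(B, \<gamma>) \<in> G \<Longrightarrow> cfg_derives G [Inl B] \<gamma>"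
proof -
  assume h: "(B, \<gamma>) \<in> G"
  have "cfg_derives G [Inl B] ([] @ [Inl B] @ [])" by (simp add: cfg_derives.refl)
  from cfg_derives.step[OF this h] show ?thesis by simp
qed

lemma cfg_refl': "cfg_derives G u u" by (rule cfg_derives.refl)

definition conc :: "'a list set \<Rightarrow> 'a list set \<Rightarrow> 'a list set" where
  "conc X Y = {u @ v | u v. u \<in> X \<and> v \<in> Y}"

definition S1 :: "(nat \<Rightarrow> 't list set) \<Rightarrow> (nat + 't) \<Rightarrow> 't list set" where
  "S1 L x = (case x of Inl k \<Rightarrow> L k | Inr t \<Rightarrow> {[t]})"

fun Sem :: "(nat \<Rightarrow> 't list set) \<Rightarrow> (nat + 't) list \<Rightarrow> 't list set" where
  "Sem L [] = {[]}"
| "Sem L (x # xs) = conc (S1 L x) (Sem L xs)"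

lemma conc_Nil_right[simp]: "conc X {[]} = X" by (auto simp: conc_def)
lemma conc_Nil_left[simp]: "conc {[]} X = X" by (auto simp: conc_def)
lemma conc_assoc: "conc (conc X Y) Z = conc X (conc Y Z)"
  unfolding conc_def by (auto, metis append.assoc, metis append.assoc)

lemma Sem_append: "Sem L (xs @ ys) = conc (Sem L xs) (Sem L ys)"
  by (induction xs) (simp_all add: conc_assoc)

lemma Sem_single: "Sem L [Inl k] = L k" by (simp add: S1_def)

lemma Sem_terms: "Sem L (map Inr w) = {w}"
  by (induction w) (auto simp: conc_def S1_def)

lemma conc_mono: "X \<subseteq> X' \<Longrightarrow> Y \<subseteq> Y' \<Longrightarrow> conc X Y \<subseteq> conc X' Y'"
  by (auto simp: conc_def)

lemma cfg_sound:
  assumes prods: "\<And>B \<gamma>. (B, \<gamma>) \<in> G \<Longrightarrow> Sem L \<gamma> \<subseteq> L B"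
  shows "cfg_derives G u v \<Longrightarrow> Sem L v \<subseteq> Sem L u"
proof (induction rule: cfg_derives.induct)
  case refl then show ?case by simp
next
  case (step u0 \<alpha> B \<beta> \<gamma>)
  have "Sem L (\<alpha> @ \<gamma> @ \<beta>) = conc (Sem L \<alpha>) (conc (Sem L \<gamma>) (Sem L \<beta>))" by (simp only: Sem_append)
  also have "\<dots> \<subseteq> conc (Sem L \<alpha>) (conc (Sem L [Inl B]) (Sem L \<beta>))"
    using prods[OF step.hyps(2)] unfolding Sem_single by (intro conc_mono) auto
  also have "\<dots> = Sem L (\<alpha> @ [Inl B] @ \<beta>)" by (simp only: Sem_append)
  finally show ?case using step.IH by blast
qed

section \<open>The grammar\<close>

definition tm :: "lt \<Rightarrow> nat option" where "tm x = Some (lc x)"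
abbreviation T :: "lt \<Rightarrow> nat + nat option" where "T x \<equiv> Inr (tm x)"
abbreviation NT :: "nat \<Rightarrow> nat + nat option" where "NT k \<equiv> Inl k"

definition Pg :: "(nat \<times> (nat + nat option) list) set" where
  "Pg = {(0, [NT 1, T P, NT 0, T P, NT 3]), (0, [NT 1, T Q, NT 0, T Q, NT 3]),
         (0, [NT 1, T A, NT 0, T A, NT 3]), (0, [NT 1, Inr None, NT 3]),
         (1, []), (1, [NT 1, NT 1]), (1, [T P, NT 2, T Q]),
         (2, [NT 1, T Q, NT 1, T P, NT 1]), (2, [NT 1, T A, NT 2, T A, NT 1]),
         (3, []), (3, [NT 3, NT 3]), (3, [T Q, NT 4, T P]),
         (4, [NT 3, T P, NT 3, T Q, NT 3]), (4, [NT 3, T A, NT 4, T A, NT 3])}"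

lemma finite_Pg: "finite Pg" by (simp add: Pg_def)

definition Lg :: "nat \<Rightarrow> nat option list set" where
  "Lg k = (if k = 0 then {map tm U @ None # map tm (rev V) | U V. \<exists>cs. dec U cs \<and> dec V cs}
           else if k = 1 then {map tm z | z. Zs z}
           else if k = 2 then {map tm w | w. Ws w}
           else if k = 3 then {map tm (rev z) | z. Zs z}
           else if k = 4 then {map tm (rev w) | w. Ws w} else {})"

lemma Sem_Cons_iff: "x \<in> Sem L (y # ys) \<longleftrightarrow> (\<exists>a b. x = a @ b \<and> a \<in> S1 L y \<and> b \<in> Sem L ys)"
  by (auto simp: conc_def)

lemma S1_NT[simp]: "S1 L (Inl k) = L k" and S1_T[simp]: "S1 L (Inr t) = {[t]}"
  by (simp_all add: S1_def)

lemma Lg0: "Lg 0 = {map tm U @ None # map tm (rev V) | U V. \<exists>cs. dec U cs \<and> dec V cs}"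
  and Lg1: "Lg 1 = {map tm z | z. Zs z}" and Lg2: "Lg 2 = {map tm w | w. Ws w}"
  and Lg3: "Lg 3 = {map tm (rev z) | z. Zs z}" and Lg4: "Lg 4 = {map tm (rev w) | w. Ws w}"
  by (simp_all add: Lg_def)

lemma L0_step: "z \<in> Lg 1 \<Longrightarrow> m \<in> Lg 0 \<Longrightarrow> z' \<in> Lg 3 \<Longrightarrow> z @ [tm c] @ m @ [tm c] @ z' \<in> Lg 0"
proof -
  assume "z \<in> Lg 1" "m \<in> Lg 0" "z' \<in> Lg 3"
  then obtain z0 U V cs z0' where h: "z = map tm z0" "Zs z0" "m = map tm U @ None # map tm (rev V)"
    "dec U cs" "dec V cs" "z' = map tm (rev z0')" "Zs z0'"
    unfolding Lg0 Lg1 Lg3 by blast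
  have "dec (z0 @ c # U) (c # cs)" "dec (z0' @ c # V) (c # cs)"
    using dec_cons_intro h by auto
  moreover have "z @ [tm c] @ m @ [tm c] @ z' = map tm (z0 @ c # U) @ None # map tm (rev (z0' @ c # V))"
    using h by simp
  ultimately show ?thesis unfolding Lg0 by blast
qed

lemma L0_base: "z \<in> Lg 1 \<Longrightarrow> z' \<in> Lg 3 \<Longrightarrow> z @ [None] @ z' \<in> Lg 0"
proof -
  assume "z \<in> Lg 1" "z' \<in> Lg 3"
  then obtain z0 z0' where h: "z = map tm z0" "Zs z0" "z' = map tm (rev z0')" "Zs z0'"
    unfolding Lg1 Lg3 by blast
  then have "dec z0 []" "dec z0' []" using d0 by auto
  moreover have "z @ [None] @ z' = map tm z0 @ None # map tm (rev z0')" using h by simp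
  ultimately show ?thesis unfolding Lg0 by blast
qed

lemma L1a: "[] \<in> Lg 1" unfolding Lg1 using Z0 by force
lemma L1b: "x \<in> Lg 1 \<Longrightarrow> y \<in> Lg 1 \<Longrightarrow> x @ y \<in> Lg 1"
  unfolding Lg1 using Zc by (smt (verit, ccfv_threshold) map_append mem_Collect_eq)
lemma L1c: "w \<in> Lg 2 \<Longrightarrow> [tm P] @ w @ [tm Q] \<in> Lg 1"
proof -
  assume "w \<in> Lg 2"
  then obtain w0 where "w = map tm w0" "Ws w0" unfolding Lg2 by blast
  then have "[tm P] @ w @ [tm Q] = map tm (P # w0 @ [Q])" "Zs (P # w0 @ [Q])" using Zr by auto
  then show ?thesis unfolding Lg1 by blast
qed
lemma L2a: "a \<in> Lg 1 \<Longrightarrow> b \<in> Lg 1 \<Longrightarrow> c \<in> Lg 1 \<Longrightarrow> a @ [tm Q] @ b @ [tm P] @ c \<in> Lg 2"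
proof -
  assume "a \<in> Lg 1" "b \<in> Lg 1" "c \<in> Lg 1"
  then obtain a0 b0 c0 where h: "a = map tm a0" "b = map tm b0" "c = map tm c0" "Zs a0" "Zs b0" "Zs c0"
    unfolding Lg1 by blast
  then have "a @ [tm Q] @ b @ [tm P] @ c = map tm (a0 @ Q # b0 @ P # c0)" "Ws (a0 @ Q # b0 @ P # c0)"
    using W0 by auto
  then show ?thesis unfolding Lg2 by blast
qed
lemma L2b: "a \<in> Lg 1 \<Longrightarrow> w \<in> Lg 2 \<Longrightarrow> c \<in> Lg 1 \<Longrightarrow> a @ [tm A] @ w @ [tm A] @ c \<in> Lg 2"
proof -
  assume "a \<in> Lg 1" "w \<in> Lg 2" "c \<in> Lg 1"
  then obtain a0 w0 c0 where h: "a = map tm a0" "w = map tm w0" "c = map tm c0" "Zs a0" "Ws w0" "Zs c0"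
    unfolding Lg1 Lg2 by blast
  then have "a @ [tm A] @ w @ [tm A] @ c = map tm (a0 @ A # w0 @ A # c0)" "Ws (a0 @ A # w0 @ A # c0)"
    using Wn by auto
  then show ?thesis unfolding Lg2 by blast
qed
lemma L3a: "[] \<in> Lg 3" unfolding Lg3 using Z0 by force
lemma L3b: "x \<in> Lg 3 \<Longrightarrow> y \<in> Lg 3 \<Longrightarrow> x @ y \<in> Lg 3"
proof -
  assume "x \<in> Lg 3" "y \<in> Lg 3"
  then obtain x0 y0 where h: "x = map tm (rev x0)" "y = map tm (rev y0)" "Zs x0" "Zs y0" unfolding Lg3 by blast
  then have "x @ y = map tm (rev (y0 @ x0))" "Zs (y0 @ x0)" using Zc by auto
  then show ?thesis unfolding Lg3 by blast
qed
lemma L3c: "w \<in> Lg 4 \<Longrightarrow> [tm Q] @ w @ [tm P] \<in> Lg 3"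
proof -
  assume "w \<in> Lg 4"
  then obtain w0 where "w = map tm (rev w0)" "Ws w0" unfolding Lg4 by blast
  then have "[tm Q] @ w @ [tm P] = map tm (rev (P # w0 @ [Q]))" "Zs (P # w0 @ [Q])" using Zr by auto
  then show ?thesis unfolding Lg3 by blast
qed
lemma L4a: "a \<in> Lg 3 \<Longrightarrow> b \<in> Lg 3 \<Longrightarrow> c \<in> Lg 3 \<Longrightarrow> a @ [tm P] @ b @ [tm Q] @ c \<in> Lg 4"
proof -
  assume "a \<in> Lg 3" "b \<in> Lg 3" "c \<in> Lg 3"
  then obtain a0 b0 c0 where h: "a = map tm (rev a0)" "b = map tm (rev b0)" "c = map tm (rev c0)" "Zs a0" "Zs b0" "Zs c0"
    unfolding Lg3 by blast
  then have "a @ [tm P] @ b @ [tm Q] @ c = map tm (rev (c0 @ Q # b0 @ P # a0))" "Ws (c0 @ Q # b0 @ P # a0)"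
    using W0 by auto
  then show ?thesis unfolding Lg4 by blast
qed
lemma L4b: "a \<in> Lg 3 \<Longrightarrow> w \<in> Lg 4 \<Longrightarrow> c \<in> Lg 3 \<Longrightarrow> a @ [tm A] @ w @ [tm A] @ c \<in> Lg 4"
proof -
  assume "a \<in> Lg 3" "w \<in> Lg 4" "c \<in> Lg 3"
  then obtain a0 w0 c0 where h: "a = map tm (rev a0)" "w = map tm (rev w0)" "c = map tm (rev c0)" "Zs a0" "Ws w0" "Zs c0"
    unfolding Lg3 Lg4 by blast
  then have "a @ [tm A] @ w @ [tm A] @ c = map tm (rev (c0 @ A # w0 @ A # a0))" "Ws (c0 @ A # w0 @ A # a0)"
    using Wn by auto
  then show ?thesis unfolding Lg4 by blast
qed

lemma Pg_sound: "(B, \<gamma>) \<in> Pg \<Longrightarrow> Sem Lg \<gamma> \<subseteq> Lg B"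
  unfolding Pg_def
  apply (elim insertE emptyE)
  by (auto simp: conc_def intro!: L0_step[unfolded One_nat_def, simplified] L0_base[unfolded One_nat_def, simplified]
      L1a[unfolded One_nat_def] L1b[unfolded One_nat_def] L1c[unfolded One_nat_def, simplified]
      L2a[unfolded One_nat_def, simplified] L2b[unfolded One_nat_def, simplified] L3a L3b L3c[simplified]
      L4a[simplified] L4b[simplified])


lemma cfg_list: "list_all2 (\<lambda>X w. cfg_derives G [X] w) xs ws \<Longrightarrow> cfg_derives G xs (concat ws)"
proof (induction rule: list_all2_induct)
  case Nil then show ?case by (simp add: cfg_derives.refl)
next
  case (Cons X xs w ws)
  then show ?case using cfg_app[of G "[X]" w xs "concat ws"] by simp
qed

lemma use_prod: "(B, \<gamma>) \<in> Pg \<Longrightarrow> list_all2 (\<lambda>X w. cfg_derives Pg [X] w) \<gamma> ws \<Longrightarrow> concat ws = t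
  \<Longrightarrow> cfg_derives Pg [Inl B] t"
  using cfg_trans[OF cfg_list cfg_prod] by blast

lemma rT: "cfg_derives G [Inr t] [Inr t]" by (rule cfg_derives.refl)

lemma Zs_Ws_complete:
  shows "Zs z \<Longrightarrow> cfg_derives Pg [NT 1] (map Inr (map tm z)) \<and> cfg_derives Pg [NT 3] (map Inr (map tm (rev z)))"
    and "Ws w \<Longrightarrow> cfg_derives Pg [NT 2] (map Inr (map tm w)) \<and> cfg_derives Pg [NT 4] (map Inr (map tm (rev w)))"
proof (induction rule: Zs_Ws.inducts)
  case Z0
  show ?case
    using use_prod[of 1 "[]" "[]"] use_prod[of 3 "[]" "[]"] by (simp add: Pg_def)
next
  case (Zc u v)
  show ?case
  proof
    show "cfg_derives Pg [NT 1] (map Inr (map tm (u @ v)))"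
      by (rule use_prod[of 1 "[NT 1, NT 1]" "[map Inr (map tm u), map Inr (map tm v)]"])
        (use Zc in \<open>simp_all add: Pg_def\<close>)
    show "cfg_derives Pg [NT 3] (map Inr (map tm (rev (u @ v))))"
      by (rule use_prod[of 3 "[NT 3, NT 3]" "[map Inr (map tm (rev v)), map Inr (map tm (rev u))]"])
        (use Zc in \<open>simp_all add: Pg_def\<close>)
  qed
next
  case (Zr w)
  show ?case
  proof
    show "cfg_derives Pg [NT 1] (map Inr (map tm (P # w @ [Q])))"
      by (rule use_prod[of 1 "[T P, NT 2, T Q]" "[[T P], map Inr (map tm w), [T Q]]"])
        (use Zr in \<open>simp_all add: Pg_def rT\<close>)
    show "cfg_derives Pg [NT 3] (map Inr (map tm (rev (P # w @ [Q]))))"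
      by (rule use_prod[of 3 "[T Q, NT 4, T P]" "[[T Q], map Inr (map tm (rev w)), [T P]]"])
        (use Zr in \<open>simp_all add: Pg_def rT\<close>)
  qed
next
  case (W0 z1 z2 z3)
  show ?case
  proof
    show "cfg_derives Pg [NT 2] (map Inr (map tm (z1 @ Q # z2 @ P # z3)))"
      by (rule use_prod[of 2 "[NT 1, T Q, NT 1, T P, NT 1]"
            "[map Inr (map tm z1), [T Q], map Inr (map tm z2), [T P], map Inr (map tm z3)]"])
        (use W0 in \<open>simp_all add: Pg_def rT\<close>)
    show "cfg_derives Pg [NT 4] (map Inr (map tm (rev (z1 @ Q # z2 @ P # z3))))"
      by (rule use_prod[of 4 "[NT 3, T P, NT 3, T Q, NT 3]"
            "[map Inr (map tm (rev z3)), [T P], map Inr (map tm (rev z2)), [T Q], map Inr (map tm (rev z1))]"])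
        (use W0 in \<open>simp_all add: Pg_def rT\<close>)
  qed
next
  case (Wn z1 w z2)
  show ?case
  proof
    show "cfg_derives Pg [NT 2] (map Inr (map tm (z1 @ A # w @ A # z2)))"
      by (rule use_prod[of 2 "[NT 1, T A, NT 2, T A, NT 1]"
            "[map Inr (map tm z1), [T A], map Inr (map tm w), [T A], map Inr (map tm z2)]"])
        (use Wn in \<open>simp_all add: Pg_def rT\<close>)
    show "cfg_derives Pg [NT 4] (map Inr (map tm (rev (z1 @ A # w @ A # z2))))"
      by (rule use_prod[of 4 "[NT 3, T A, NT 4, T A, NT 3]"
            "[map Inr (map tm (rev z2)), [T A], map Inr (map tm (rev w)), [T A], map Inr (map tm (rev z1))]"])
        (use Wn in \<open>simp_all add: Pg_def rT\<close>)
  qed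
qed

lemma S_complete: "dec U cs \<Longrightarrow> dec V cs \<Longrightarrow> cfg_derives Pg [NT 0] (map Inr (map tm U @ None # map tm (rev V)))"
proof (induction cs arbitrary: U V)
  case Nil
  then have "Zs U" "Zs V" using dec_NilE by auto
  then have d1: "cfg_derives Pg [NT 1] (map Inr (map tm U))" and d3: "cfg_derives Pg [NT 3] (map Inr (map tm (rev V)))"
    using Zs_Ws_complete(1) by blast+
  have p: "(0, [NT 1, Inr None, NT 3]) \<in> Pg" by (simp add: Pg_def)
  show ?case
    by (rule use_prod[OF p, of "[map Inr (map tm U), [Inr None], map Inr (map tm (rev V))]"])
      (use d1 d3 in \<open>simp_all add: rT\<close>)
next
  case (Cons c cs)
  obtain z U' z' V' where h: "U = z @ c # U'" "Zs z" "dec U' cs" "V = z' @ c # V'" "Zs z'" "dec V' cs"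
    using dec_consE[OF Cons.prems(1)] dec_consE[OF Cons.prems(2)] by blast
  have pr: "(0, [NT 1, T c, NT 0, T c, NT 3]) \<in> Pg" by (cases c) (simp_all add: Pg_def)
  have d1: "cfg_derives Pg [NT 1] (map Inr (map tm z))" and d3: "cfg_derives Pg [NT 3] (map Inr (map tm (rev z')))"
    using Zs_Ws_complete(1) h by blast+
  have d0: "cfg_derives Pg [NT 0] (map Inr (map tm U' @ None # map tm (rev V')))" using Cons.IH h by blast
  show ?case
    by (rule use_prod[OF pr, of "[map Inr (map tm z), [T c], map Inr (map tm U' @ None # map tm (rev V')),
         [T c], map Inr (map tm (rev z'))]"])
      (use h d0 d1 d3 in \<open>simp_all add: rT\<close>)
qed

lemma Lg0_derives: "w \<in> Lg 0 \<longleftrightarrow> cfg_derives Pg [Inl 0] (map Inr w)"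
proof
  assume "w \<in> Lg 0"
  then show "cfg_derives Pg [Inl 0] (map Inr w)" unfolding Lg0 using S_complete by auto
next
  assume "cfg_derives Pg [Inl 0] (map Inr w)"
  then have "Sem Lg (map Inr w) \<subseteq> Sem Lg [Inl 0]" using cfg_sound[OF Pg_sound] by blast
  then show "w \<in> Lg 0" by (simp add: Sem_terms Sem_single)
qed

definition Ag :: "nat set" where "Ag = {lc P, lc Q, lc A}"

lemma lc_surj: "set u \<subseteq> Ag \<Longrightarrow> \<exists>U. u = map lc U"
proof (induction u)
  case Nil then show ?case by simp
next
  case (Cons x u)
  then obtain U where "u = map lc U" by auto
  moreover obtain c where "x = lc c" using Cons.prems unfolding Ag_def by auto
  ultimately show ?case by (metis list.simps(9))
qed

lemma lc_in: "lc c \<in> Ag" by (cases c) (simp_all add: Ag_def)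
lemma Ag_lc: "set (map lc U) \<subseteq> Ag" using lc_in by auto

lemma wp_eq: "word_problem Mn Ag = Lg 0"
proof
  show "word_problem Mn Ag \<subseteq> Lg 0"
  proof
    fix x assume "x \<in> word_problem Mn Ag"
    then obtain u v where x: "x = map Some u @ [None] @ rev (map Some v)" "set u \<subseteq> Ag" "set v \<subseteq> Ag"
      "eval_word Mn u = eval_word Mn v" unfolding word_problem_def by blast
    then obtain U V where uv: "u = map lc U" "v = map lc V" using lc_surj by metis
    then have "foldl st [] U = foldl st [] V" using x(4) by (simp add: eval_lc inj_eq)
    then have "\<exists>cs. dec U cs \<and> dec V cs" using red_eq_iff by blast
    moreover have "x = map tm U @ None # map tm (rev V)" using x uv by (simp add: tm_def rev_map comp_def)
    ultimately show "x \<in> Lg 0" unfolding Lg0 by blast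
  qed
next
  show "Lg 0 \<subseteq> word_problem Mn Ag"
  proof
    fix x assume "x \<in> Lg 0"
    then obtain U V cs where x: "x = map tm U @ None # map tm (rev V)" "dec U cs" "dec V cs" unfolding Lg0 by blast
    then have "foldl st [] U = foldl st [] V" using red_eq_iff by blast
    then have "eval_word Mn (map lc U) = eval_word Mn (map lc V)" by (simp add: eval_lc)
    moreover have "x = map Some (map lc U) @ [None] @ rev (map Some (map lc V))"
      using x by (simp add: tm_def rev_map comp_def)
    ultimately show "x \<in> word_problem Mn Ag" unfolding word_problem_def using Ag_lc by blast
  qed
qed

lemma cf_Mn: "context_free_monoid Mn"
  unfolding context_free_monoid_def
proof (intro conjI exI)
  show "monoid Mn" by (rule monoid_Mn)
  show "finite Ag" by (simp add: Ag_def)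
  show "Ag \<subseteq> carrier Mn" by (auto simp: Ag_def Mn_carrier lc_def valid_single)
  show "\<forall>x\<in>carrier Mn. \<exists>w. set w \<subseteq> Ag \<and> eval_word Mn w = x"
  proof
    fix x assume "x \<in> carrier Mn"
    then obtain s where "x = to_nat s" "valid s" by (auto simp: Mn_carrier)
    then have "eval_word Mn (map lc (rev s)) = x" by (simp add: eval_lc foldl_rev_valid)
    then show "\<exists>w. set w \<subseteq> Ag \<and> eval_word Mn w = x" using Ag_lc by blast
  qed
  show "context_free (word_problem Mn Ag)"
    unfolding context_free_def wp_eq using finite_Pg Lg0_derives by blast
qed

definition tg :: "nat \<Rightarrow> nat set \<Rightarrow> nat set" where "tg c g = (if c \<in> g then g - {c} else insert c g)"

fun actL :: "lt \<Rightarrow> nat list \<times> nat set \<Rightarrow> nat list \<times> nat set" where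
  "actL P (cs, g) = (0 # cs, g)"
| "actL A ([], g) = ([], g)"
| "actL A (c # cs, g) = (Suc c # cs, g)"
| "actL Q ([], g) = ([], g)"
| "actL Q (c # cs, g) = (cs, tg c g)"

definition acts :: "lt list \<Rightarrow> nat list \<times> nat set \<Rightarrow> nat list \<times> nat set" where
  "acts w x = foldl (\<lambda>x l. actL l x) x w"

lemma acts_Nil[simp]: "acts [] x = x" by (simp add: acts_def)
lemma acts_Cons[simp]: "acts (l # w) x = acts w (actL l x)" by (simp add: acts_def)
lemma acts_append: "acts (u @ v) x = acts v (acts u x)" by (simp add: acts_def)

lemma acts_repA: "acts (replicate n A) (c # cs, g) = ((c + n) # cs, g)"
  by (induction n arbitrary: c) auto

lemma tg_tg: "tg n (tg n g) = g" by (auto simp: tg_def)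

lemma acts_rel: "acts (rev (Q # pat n)) x = x"
proof -
  obtain cs g where x: "x = (cs, g)" by force
  show ?thesis unfolding rev_rel x by (simp add: acts_append acts_repA tg_tg)
qed

lemma acts_st: "acts (rev (foldl st s w)) x = acts (rev s @ w) x"
proof (induction w arbitrary: x rule: rev_induct)
  case Nil then show ?case by simp
next
  case (snoc y w)
  let ?T = "foldl st s w"
  have "acts (rev (st ?T y)) x = acts (rev ?T @ [y]) x"
  proof (cases "y = Q \<and> (\<exists>n t. ?T = pat n @ t)")
    case True
    then obtain n t where T: "?T = pat n @ t" and y: "y = Q" by blast
    have "acts (rev ?T @ [y]) x = acts (rev (Q # pat n)) (acts (rev t) x)"
      using T y by (simp add: acts_append)
    also have "\<dots> = acts (rev t) x" by (rule acts_rel)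
    finally show ?thesis using T y st_pat by simp
  next
    case False
    then show ?thesis using st_push[OF False] by simp
  qed
  then show ?case using snoc by (simp add: acts_append)
qed

definition Phi :: "nat \<Rightarrow> nat list \<times> nat set \<Rightarrow> nat list \<times> nat set" where
  "Phi m = acts (rev (from_nat m :: lt list))"

lemma Phi_mult: "Phi (x \<otimes>\<^bsub>Mn\<^esub> y) z = Phi y (Phi x z)"
  by (simp add: Phi_def Mn_mult acts_st acts_append)

lemma Phi_one: "Phi \<one>\<^bsub>Mn\<^esub> z = z" by (simp add: Phi_def Mn_one)

definition sd :: "nat set \<Rightarrow> nat set \<Rightarrow> nat set" where "sd a b = (a - b) \<union> (b - a)"

lemma actL_sd: "actL l (cs, g) = (fst (actL l (cs, {})), sd g (snd (actL l (cs, {}))))"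
  by (cases l; cases cs) (auto simp: sd_def tg_def)

lemma acts_sd: "acts w (cs, g) = (fst (acts w (cs, {})), sd g (snd (acts w (cs, {}))))"
proof (induction w arbitrary: cs g)
  case Nil then show ?case by (simp add: sd_def)
next
  case (Cons l w)
  obtain cs1 d1 where a: "actL l (cs, {}) = (cs1, d1)" by force
  have b: "actL l (cs, g) = (cs1, sd g d1)" using actL_sd[of l cs g] a by simp
  have "acts (l # w) (cs, g) = acts w (cs1, sd g d1)" using b by simp
  also have "\<dots> = (fst (acts w (cs1, {})), sd (sd g d1) (snd (acts w (cs1, {}))))" using Cons by blast
  also have "acts (l # w) (cs, {}) = (fst (acts w (cs1, {})), sd d1 (snd (acts w (cs1, {}))))"
    using a Cons[of cs1 d1] by simp
  ultimately show ?case by (auto simp: sd_def)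
qed

lemma acts_len_mono: "length cs' \<le> length cs \<Longrightarrow> length (fst (acts w (cs', g'))) \<le> length (fst (acts w (cs, g)))"
proof (induction w arbitrary: cs cs' g g')
  case Nil then show ?case by simp
next
  case (Cons l w)
  obtain cs1 g1 where a: "actL l (cs, g) = (cs1, g1)" by force
  obtain cs1' g1' where b: "actL l (cs', g') = (cs1', g1')" by force
  have "length cs1' \<le> length cs1"
    using Cons.prems a b by (cases l; cases cs; cases cs') auto
  then show ?case using Cons.IH a b by simp
qed

lemma acts_finite: "finite g \<Longrightarrow> finite (snd (acts w (cs, g)))"
proof (induction w arbitrary: cs g)
  case (Cons l w)
  obtain cs1 g1 where a: "actL l (cs, g) = (cs1, g1)" by force
  have "finite g1" using Cons.prems a by (cases l; cases cs) (auto simp: tg_def)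
  then show ?case using Cons.IH a by simp
qed simp

definition del :: "nat \<Rightarrow> nat set" where "del m = snd (Phi m ([], {}))"
definition sig :: "nat \<Rightarrow> nat list" where "sig m = fst (Phi m ([], {}))"

lemma del_finite: "finite (del m)" unfolding del_def Phi_def by (rule acts_finite) simp

lemma sig_leftinv: "y \<otimes>\<^bsub>Mn\<^esub> u = \<one>\<^bsub>Mn\<^esub> \<Longrightarrow> sig u = []"
proof -
  assume h: "y \<otimes>\<^bsub>Mn\<^esub> u = \<one>\<^bsub>Mn\<^esub>"
  obtain cs g where c: "Phi y ([], {}) = (cs, g)" by force
  have "Phi u (cs, g) = ([], {})" using arg_cong[OF h, of "\<lambda>m. Phi m ([], {})"] c
    by (simp add: Phi_mult Phi_one)
  moreover have "length (sig u) \<le> length (fst (Phi u (cs, g)))"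
    unfolding sig_def Phi_def by (rule acts_len_mono) simp
  ultimately show ?thesis by simp
qed

lemma del_mult: "sig u = [] \<Longrightarrow> del (u \<otimes>\<^bsub>Mn\<^esub> v) = sd (del u) (del v)"
proof -
  assume "sig u = []"
  then have "Phi u ([], {}) = ([], del u)" unfolding sig_def del_def by (metis prod.collapse)
  then have "Phi (u \<otimes>\<^bsub>Mn\<^esub> v) ([], {}) = Phi v ([], del u)" by (simp add: Phi_mult)
  also have "\<dots> = (sig v, sd (del u) (del v))"
    unfolding Phi_def sig_def del_def by (rule acts_sd)
  finally show ?thesis unfolding del_def by simp
qed

definition xN :: "nat \<Rightarrow> nat" where "xN N = to_nat (Q # replicate N A @ [P])"

lemma valid_noQ: "Q \<notin> set s \<Longrightarrow> valid s"
  unfolding valid_def redpat_def by (metis in_set_dropD list.set_intros(1))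

lemma valid_xN: "valid (Q # replicate N A @ [P])"
proof -
  have "\<not> redpat (Q # replicate N A @ [P])"
  proof
    assume "redpat (Q # replicate N A @ [P])"
    then obtain n r where "replicate N A @ [P] = pat n @ r" unfolding redpat_def by auto
    then have "Q \<in> set (replicate N A @ [P])" by (simp add: pat_def)
    then show False by auto
  qed
  moreover have "valid (replicate N A @ [P])" by (rule valid_noQ) auto
  ultimately show ?thesis using valid_cons by blast
qed

lemma xN_carrier: "xN N \<in> carrier Mn" using valid_xN by (simp add: xN_def Mn_carrier)

lemma xN_sq: "xN N \<otimes>\<^bsub>Mn\<^esub> xN N = \<one>\<^bsub>Mn\<^esub>"
proof -
  have "foldl st (Q # replicate N A @ [P]) (rev (Q # replicate N A @ [P])) = []"
    using st_pat[of N "[]"] by (simp add: foldl_rep_A pat_def)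
  then show ?thesis by (simp add: xN_def Mn_mult_to Mn_one)
qed

lemma del_xN: "del (xN N) = {N}"
proof -
  have "acts (P # replicate N A @ [Q]) ([], {}) = ([], {N})"
    using acts_repA[of N 0 "[]" "{}"] by (simp add: acts_append tg_def)
  then show ?thesis by (simp add: del_def Phi_def xN_def)
qed

lemma idem_dec:
  assumes ec: "e \<in> carrier Mn" and ee: "e \<otimes>\<^bsub>Mn\<^esub> e = e"
  shows "\<exists>r l. r \<in> carrier Mn \<and> l \<in> carrier Mn \<and> l \<otimes>\<^bsub>Mn\<^esub> r = \<one>\<^bsub>Mn\<^esub> \<and> r \<otimes>\<^bsub>Mn\<^esub> l = e"
proof -
  obtain s where es: "e = to_nat s" "valid s" using ec by (auto simp: Mn_carrier)
  define w where "w = rev s"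
  have full: "foldl st s w = s" using ee es by (simp add: Mn_mult_to w_def)
  define f where "f k = length (foldl st s (take k w))" for k
  obtain k0 where k0: "k0 \<le> length w" "\<forall>k \<le> length w. f k0 \<le> f k"
  proof -
    let ?m = "Min (f ` {..length w})"
    have "?m \<in> f ` {..length w}" by (intro Min_in) auto
    then obtain k0 where "k0 \<le> length w" "f k0 = ?m" by (metis atMost_iff imageE)
    moreover have "\<forall>k \<le> length w. ?m \<le> f k" by (auto intro: Min_le)
    ultimately show ?thesis using that by auto
  qed
  define b where "b = foldl st s (take k0 w)"
  have vb: "valid b" unfolding b_def using valid_foldl es(2) by blast
  have fb: "length b = f k0" by (simp add: b_def f_def)
  have wsplit: "w = take k0 w @ drop k0 w" by simp
  have h2: "\<forall>j \<le> length (drop k0 w). length b \<le> length (foldl st ([] @ b) (take j (drop k0 w)))"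
  proof (intro allI impI)
    fix j assume j: "j \<le> length (drop k0 w)"
    have "foldl st b (take j (drop k0 w)) = foldl st s (take (k0 + j) w)"
      by (simp add: b_def take_add)
    moreover have "f k0 \<le> f (k0 + j)" using k0 j by auto
    ultimately show "length b \<le> length (foldl st ([] @ b) (take j (drop k0 w)))"
      using fb by (simp add: f_def)
  qed
  have ph2: "foldl st b (drop k0 w) = s"
    using full wsplit by (metis b_def foldl_append)
  have vd: "valid (rev (drop k0 w))" unfolding w_def rev_drop using valid_take es(2) by simp
  have "foldl st [] (drop k0 w) = rev (drop k0 w)"
    using foldl_valid_push[of "drop k0 w" "[]"] vd by simp
  then have s2: "s = rev (drop k0 w) @ b" using frame[OF h2] ph2 by simp
  have "s = rev (drop k0 w) @ rev (take k0 w)" using wsplit unfolding w_def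
    by (metis rev_append rev_rev_ident)
  then have brev: "b = rev (take k0 w)" using s2 by simp
  let ?t = "rev (drop k0 w)"
  have h1: "\<forall>j \<le> length (take k0 w). length b \<le> length (foldl st (?t @ b) (take j (take k0 w)))"
  proof (intro allI impI)
    fix j assume j: "j \<le> length (take k0 w)"
    have "take j (take k0 w) = take j w" using j by (simp add: min_def split: if_splits)
    then have "foldl st (?t @ b) (take j (take k0 w)) = foldl st s (take j w)" using s2 by simp
    moreover have "f k0 \<le> f j" using k0 j by auto
    ultimately show "length b \<le> length (foldl st (?t @ b) (take j (take k0 w)))"
      using fb by (simp add: f_def)
  qed
  have "foldl st (?t @ b) (take k0 w) = foldl st ?t (take k0 w) @ b" using frame[OF h1] .
  moreover have "foldl st (?t @ b) (take k0 w) = b" using s2 b_def by simp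
  ultimately have ph1: "foldl st ?t (take k0 w) = []" by simp
  have vt: "valid ?t" using vd .
  show ?thesis
  proof (intro exI conjI)
    show "to_nat b \<in> carrier Mn" using vb by (simp add: Mn_carrier)
    show "to_nat ?t \<in> carrier Mn" using vt by (simp add: Mn_carrier)
    show "to_nat ?t \<otimes>\<^bsub>Mn\<^esub> to_nat b = \<one>\<^bsub>Mn\<^esub>" using ph1 brev by (simp add: Mn_mult_to Mn_one)
    show "to_nat b \<otimes>\<^bsub>Mn\<^esub> to_nat ?t = e" using ph2 es by (simp add: Mn_mult_to)
  qed
qed


lemma del_one: "del \<one>\<^bsub>Mn\<^esub> = {}" by (simp add: del_def Phi_one)

lemma CH_iff: "x \<in> carrier (max_subgroup M e) \<longleftrightarrow> x \<in> carrier M \<and> e \<otimes>\<^bsub>M\<^esub> x = x \<and> x \<otimes>\<^bsub>M\<^esub> e = x \<and>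
   (\<exists>y\<in>carrier M. e \<otimes>\<^bsub>M\<^esub> y = y \<and> y \<otimes>\<^bsub>M\<^esub> e = y \<and> x \<otimes>\<^bsub>M\<^esub> y = e \<and> y \<otimes>\<^bsub>M\<^esub> x = e)"
  by (simp add: max_subgroup_def)

lemma mult_H[simp]: "x \<otimes>\<^bsub>max_subgroup M e\<^esub> y = x \<otimes>\<^bsub>M\<^esub> y" by (simp add: max_subgroup_def)
lemma one_H[simp]: "\<one>\<^bsub>max_subgroup M e\<^esub> = e" by (simp add: max_subgroup_def)

lemma nfg:
  assumes ec: "e \<in> carrier Mn" and ee: "e \<otimes>\<^bsub>Mn\<^esub> e = e"
  shows "\<not> finitely_generated_group (max_subgroup Mn e)"
proof
  interpret M: monoid Mn by (rule monoid_Mn)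
  let ?H = "max_subgroup Mn e"
  assume "finitely_generated_group ?H"
  then obtain S where S: "finite S" "S \<subseteq> carrier ?H" "generate ?H S = carrier ?H"
    unfolding finitely_generated_group_def by blast
  obtain r l where rl: "r \<in> carrier Mn" "l \<in> carrier Mn" "l \<otimes>\<^bsub>Mn\<^esub> r = \<one>\<^bsub>Mn\<^esub>" "r \<otimes>\<^bsub>Mn\<^esub> l = e"
    using idem_dec[OF ec ee] by blast
  have invH: "m_inv ?H x \<in> carrier ?H \<and> x \<otimes>\<^bsub>Mn\<^esub> m_inv ?H x = e \<and> m_inv ?H x \<otimes>\<^bsub>Mn\<^esub> x = e"
    if x: "x \<in> carrier ?H" for x
  proof -
    have hx: "x \<in> carrier Mn \<and> e \<otimes>\<^bsub>Mn\<^esub> x = x \<and> x \<otimes>\<^bsub>Mn\<^esub> e = x \<and>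
      (\<exists>y\<in>carrier Mn. e \<otimes>\<^bsub>Mn\<^esub> y = y \<and> y \<otimes>\<^bsub>Mn\<^esub> e = y \<and> x \<otimes>\<^bsub>Mn\<^esub> y = e \<and> y \<otimes>\<^bsub>Mn\<^esub> x = e)"
      using x unfolding CH_iff .
    from hx obtain y where y: "y \<in> carrier Mn" "e \<otimes>\<^bsub>Mn\<^esub> y = y" "y \<otimes>\<^bsub>Mn\<^esub> e = y" "x \<otimes>\<^bsub>Mn\<^esub> y = e" "y \<otimes>\<^bsub>Mn\<^esub> x = e"
      by blast
    have xc: "x \<in> carrier Mn" "e \<otimes>\<^bsub>Mn\<^esub> x = x" "x \<otimes>\<^bsub>Mn\<^esub> e = x" using hx by (blast+)
    have yH: "y \<in> carrier ?H" unfolding CH_iff using y xc by blast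
    have uniq: "y' = y" if "y' \<in> carrier ?H" "x \<otimes>\<^bsub>Mn\<^esub> y' = e" "y' \<otimes>\<^bsub>Mn\<^esub> x = e" for y'
    proof -
      have y'c: "y' \<in> carrier Mn" "y' \<otimes>\<^bsub>Mn\<^esub> e = y'" using that(1) unfolding CH_iff by blast+
      have "y' = y' \<otimes>\<^bsub>Mn\<^esub> (x \<otimes>\<^bsub>Mn\<^esub> y)" using y'c(2) y(4) by (simp only:)
      also have "\<dots> = (y' \<otimes>\<^bsub>Mn\<^esub> x) \<otimes>\<^bsub>Mn\<^esub> y" using M.m_assoc[OF y'c(1) xc(1) y(1)] by (simp only:)
      also have "\<dots> = y" using that(3) y(2) by (simp only:)
      finally show ?thesis .
    qed
    have "m_inv ?H x = y"
      unfolding m_inv_def mult_H one_H using yH y(4,5) uniq by (intro the_equality) blast+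
    then show ?thesis using yH y by simp
  qed
  have mulH: "x \<otimes>\<^bsub>Mn\<^esub> y \<in> carrier ?H" if "x \<in> carrier ?H" "y \<in> carrier ?H" for x y
  proof -
    have hx: "x \<in> carrier Mn \<and> e \<otimes>\<^bsub>Mn\<^esub> x = x \<and> x \<otimes>\<^bsub>Mn\<^esub> e = x \<and>
      (\<exists>y\<in>carrier Mn. e \<otimes>\<^bsub>Mn\<^esub> y = y \<and> y \<otimes>\<^bsub>Mn\<^esub> e = y \<and> x \<otimes>\<^bsub>Mn\<^esub> y = e \<and> y \<otimes>\<^bsub>Mn\<^esub> x = e)"
      using that(1) unfolding CH_iff .
    have hy: "y \<in> carrier Mn \<and> e \<otimes>\<^bsub>Mn\<^esub> y = y \<and> y \<otimes>\<^bsub>Mn\<^esub> e = y \<and>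
      (\<exists>z\<in>carrier Mn. e \<otimes>\<^bsub>Mn\<^esub> z = z \<and> z \<otimes>\<^bsub>Mn\<^esub> e = z \<and> y \<otimes>\<^bsub>Mn\<^esub> z = e \<and> z \<otimes>\<^bsub>Mn\<^esub> y = e)"
      using that(2) unfolding CH_iff .
    have xc: "x \<in> carrier Mn" "e \<otimes>\<^bsub>Mn\<^esub> x = x" "x \<otimes>\<^bsub>Mn\<^esub> e = x" using hx by simp_all
    have yc: "y \<in> carrier Mn" "e \<otimes>\<^bsub>Mn\<^esub> y = y" "y \<otimes>\<^bsub>Mn\<^esub> e = y" using hy by simp_all
    from hx obtain x' where x': "x' \<in> carrier Mn" "e \<otimes>\<^bsub>Mn\<^esub> x' = x'" "x' \<otimes>\<^bsub>Mn\<^esub> e = x'" "x \<otimes>\<^bsub>Mn\<^esub> x' = e" "x' \<otimes>\<^bsub>Mn\<^esub> x = e"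
      by blast
    from hy obtain y' where y': "y' \<in> carrier Mn" "e \<otimes>\<^bsub>Mn\<^esub> y' = y'" "y' \<otimes>\<^bsub>Mn\<^esub> e = y'" "y \<otimes>\<^bsub>Mn\<^esub> y' = e" "y' \<otimes>\<^bsub>Mn\<^esub> y = e"
      by blast
    note as = M.m_assoc
    have a: "e \<otimes>\<^bsub>Mn\<^esub> (x \<otimes>\<^bsub>Mn\<^esub> y) = x \<otimes>\<^bsub>Mn\<^esub> y"
      using as[OF ec xc(1) yc(1), symmetric] xc(2) by (simp only:)
    have b: "(x \<otimes>\<^bsub>Mn\<^esub> y) \<otimes>\<^bsub>Mn\<^esub> e = x \<otimes>\<^bsub>Mn\<^esub> y"
      using as[OF xc(1) yc(1) ec] yc(3) by (simp only:)
    have c: "e \<otimes>\<^bsub>Mn\<^esub> (y' \<otimes>\<^bsub>Mn\<^esub> x') = y' \<otimes>\<^bsub>Mn\<^esub> x'"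
      using as[OF ec y'(1) x'(1), symmetric] y'(2) by (simp only:)
    have d: "(y' \<otimes>\<^bsub>Mn\<^esub> x') \<otimes>\<^bsub>Mn\<^esub> e = y' \<otimes>\<^bsub>Mn\<^esub> x'"
      using as[OF y'(1) x'(1) ec] x'(3) by (simp only:)
    have f: "(x \<otimes>\<^bsub>Mn\<^esub> y) \<otimes>\<^bsub>Mn\<^esub> (y' \<otimes>\<^bsub>Mn\<^esub> x') = e"
    proof -
      have "(x \<otimes>\<^bsub>Mn\<^esub> y) \<otimes>\<^bsub>Mn\<^esub> (y' \<otimes>\<^bsub>Mn\<^esub> x') = x \<otimes>\<^bsub>Mn\<^esub> (y \<otimes>\<^bsub>Mn\<^esub> (y' \<otimes>\<^bsub>Mn\<^esub> x'))"
        using as[OF xc(1) yc(1) M.m_closed[OF y'(1) x'(1)]] .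
      also have "\<dots> = x \<otimes>\<^bsub>Mn\<^esub> ((y \<otimes>\<^bsub>Mn\<^esub> y') \<otimes>\<^bsub>Mn\<^esub> x')"
        using as[OF yc(1) y'(1) x'(1)] by (simp only:)
      also have "\<dots> = x \<otimes>\<^bsub>Mn\<^esub> x'" using y'(4) x'(2) by (simp only:)
      finally show ?thesis using x'(4) by (simp only:)
    qed
    have g: "(y' \<otimes>\<^bsub>Mn\<^esub> x') \<otimes>\<^bsub>Mn\<^esub> (x \<otimes>\<^bsub>Mn\<^esub> y) = e"
    proof -
      have "(y' \<otimes>\<^bsub>Mn\<^esub> x') \<otimes>\<^bsub>Mn\<^esub> (x \<otimes>\<^bsub>Mn\<^esub> y) = y' \<otimes>\<^bsub>Mn\<^esub> (x' \<otimes>\<^bsub>Mn\<^esub> (x \<otimes>\<^bsub>Mn\<^esub> y))"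
        using as[OF y'(1) x'(1) M.m_closed[OF xc(1) yc(1)]] .
      also have "\<dots> = y' \<otimes>\<^bsub>Mn\<^esub> ((x' \<otimes>\<^bsub>Mn\<^esub> x) \<otimes>\<^bsub>Mn\<^esub> y)"
        using as[OF x'(1) xc(1) yc(1)] by (simp only:)
      also have "\<dots> = y' \<otimes>\<^bsub>Mn\<^esub> y" using x'(5) yc(2) by (simp only:)
      finally show ?thesis using y'(5) by (simp only:)
    qed
    have cl1: "x \<otimes>\<^bsub>Mn\<^esub> y \<in> carrier Mn" using xc yc by simp
    have cl2: "y' \<otimes>\<^bsub>Mn\<^esub> x' \<in> carrier Mn" using x' y' by simp
    show ?thesis unfolding CH_iff
      by (intro conjI cl1 a b bexI[OF _ cl2] c d f g)
  qed
  define phi where "phi x = del (l \<otimes>\<^bsub>Mn\<^esub> x \<otimes>\<^bsub>Mn\<^esub> r)" for x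
  note as = M.m_assoc
  have rc: "r \<in> carrier Mn" and lc': "l \<in> carrier Mn" using rl by auto
  have lr: "l \<otimes>\<^bsub>Mn\<^esub> e \<otimes>\<^bsub>Mn\<^esub> r = \<one>\<^bsub>Mn\<^esub>"
  proof -
    have "l \<otimes>\<^bsub>Mn\<^esub> e \<otimes>\<^bsub>Mn\<^esub> r = l \<otimes>\<^bsub>Mn\<^esub> (r \<otimes>\<^bsub>Mn\<^esub> l) \<otimes>\<^bsub>Mn\<^esub> r" using rl(4) by simp
    also have "\<dots> = (l \<otimes>\<^bsub>Mn\<^esub> r) \<otimes>\<^bsub>Mn\<^esub> (l \<otimes>\<^bsub>Mn\<^esub> r)" using rc lc' by (simp add: as)
    also have "\<dots> = \<one>\<^bsub>Mn\<^esub>" using rl(3) by simp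
    finally show ?thesis .
  qed
  have phi_e: "phi e = {}" unfolding phi_def using lr del_one by simp
  have phi_mul: "phi (x \<otimes>\<^bsub>Mn\<^esub> y) = sd (phi x) (phi y)" if "x \<in> carrier ?H" "y \<in> carrier ?H" for x y
  proof -
    have xc: "x \<in> carrier Mn" "x \<otimes>\<^bsub>Mn\<^esub> e = x" "e \<otimes>\<^bsub>Mn\<^esub> x = x" using that(1) unfolding CH_iff by blast+
    have yc: "y \<in> carrier Mn" using that(2) unfolding CH_iff by blast
    have ix0: "m_inv ?H x \<in> carrier ?H" "m_inv ?H x \<otimes>\<^bsub>Mn\<^esub> x = e" using invH[OF that(1)] by blast+
    have ix: "m_inv ?H x \<in> carrier Mn" using ix0(1) unfolding CH_iff by blast
    have split: "l \<otimes>\<^bsub>Mn\<^esub> (x \<otimes>\<^bsub>Mn\<^esub> y) \<otimes>\<^bsub>Mn\<^esub> r = (l \<otimes>\<^bsub>Mn\<^esub> x \<otimes>\<^bsub>Mn\<^esub> r) \<otimes>\<^bsub>Mn\<^esub> (l \<otimes>\<^bsub>Mn\<^esub> y \<otimes>\<^bsub>Mn\<^esub> r)"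
    proof -
      have "(l \<otimes>\<^bsub>Mn\<^esub> x \<otimes>\<^bsub>Mn\<^esub> r) \<otimes>\<^bsub>Mn\<^esub> (l \<otimes>\<^bsub>Mn\<^esub> y \<otimes>\<^bsub>Mn\<^esub> r) = l \<otimes>\<^bsub>Mn\<^esub> (x \<otimes>\<^bsub>Mn\<^esub> ((r \<otimes>\<^bsub>Mn\<^esub> l) \<otimes>\<^bsub>Mn\<^esub> (y \<otimes>\<^bsub>Mn\<^esub> r)))"
        using rc lc' xc(1) yc by (simp add: as)
      also have "\<dots> = l \<otimes>\<^bsub>Mn\<^esub> ((x \<otimes>\<^bsub>Mn\<^esub> e) \<otimes>\<^bsub>Mn\<^esub> (y \<otimes>\<^bsub>Mn\<^esub> r))"
        using rl(4) rc lc' xc(1) yc ec by (simp add: as)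
      also have "\<dots> = l \<otimes>\<^bsub>Mn\<^esub> (x \<otimes>\<^bsub>Mn\<^esub> y) \<otimes>\<^bsub>Mn\<^esub> r" using xc(2) rc lc' xc(1) yc by (simp add: as)
      finally show ?thesis by simp
    qed
    have li: "(l \<otimes>\<^bsub>Mn\<^esub> m_inv ?H x \<otimes>\<^bsub>Mn\<^esub> r) \<otimes>\<^bsub>Mn\<^esub> (l \<otimes>\<^bsub>Mn\<^esub> x \<otimes>\<^bsub>Mn\<^esub> r) = \<one>\<^bsub>Mn\<^esub>"
    proof -
      have "(l \<otimes>\<^bsub>Mn\<^esub> m_inv ?H x \<otimes>\<^bsub>Mn\<^esub> r) \<otimes>\<^bsub>Mn\<^esub> (l \<otimes>\<^bsub>Mn\<^esub> x \<otimes>\<^bsub>Mn\<^esub> r)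
          = l \<otimes>\<^bsub>Mn\<^esub> (m_inv ?H x \<otimes>\<^bsub>Mn\<^esub> ((r \<otimes>\<^bsub>Mn\<^esub> l) \<otimes>\<^bsub>Mn\<^esub> (x \<otimes>\<^bsub>Mn\<^esub> r)))"
        using rc lc' xc(1) ix by (simp add: as)
      also have "\<dots> = l \<otimes>\<^bsub>Mn\<^esub> (m_inv ?H x \<otimes>\<^bsub>Mn\<^esub> ((e \<otimes>\<^bsub>Mn\<^esub> x) \<otimes>\<^bsub>Mn\<^esub> r))"
        using rl(4) rc lc' xc(1) ix ec by (simp add: as)
      also have "\<dots> = l \<otimes>\<^bsub>Mn\<^esub> ((m_inv ?H x \<otimes>\<^bsub>Mn\<^esub> x) \<otimes>\<^bsub>Mn\<^esub> r)"
        using xc(3) rc lc' xc(1) ix by (simp add: as)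
      also have "\<dots> = l \<otimes>\<^bsub>Mn\<^esub> e \<otimes>\<^bsub>Mn\<^esub> r" using ix0(2) rc lc' ec by (simp add: as)
      finally show ?thesis using lr by simp
    qed
    show ?thesis unfolding phi_def split using del_mult[OF sig_leftinv[OF li]] .
  qed
  define F where "F = (\<Union>s\<in>S. phi s \<union> phi (m_inv ?H s))"
  have fF: "finite F" unfolding F_def phi_def using S(1) del_finite by auto
  define K where "K = Max (insert 0 F)"
  have FK: "\<And>n. n \<in> F \<Longrightarrow> n \<le> K" unfolding K_def using fF by simp
  have gen: "h \<in> carrier ?H \<and> phi h \<subseteq> {..K}" if "h \<in> generate ?H S" for h
    using that
  proof (induction rule: generate.induct)
    case one
    have "e \<in> carrier ?H" unfolding CH_iff using ec ee by blast
    then show ?case using phi_e by simp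
  next
    case (incl h)
    then show ?case using S(2) FK unfolding F_def by blast
  next
    case (inv h)
    then show ?case using S(2) FK invH[of h] unfolding F_def by blast
  next
    case (eng h1 h2)
    then show ?case using mulH phi_mul by (auto simp: sd_def)
  qed
  let ?X = "xN (Suc K)"
  let ?h = "r \<otimes>\<^bsub>Mn\<^esub> ?X \<otimes>\<^bsub>Mn\<^esub> l"
  have xc: "?X \<in> carrier Mn" by (rule xN_carrier)
  have hc: "?h \<in> carrier Mn" using rc lc' xc by simp
  have he1: "e \<otimes>\<^bsub>Mn\<^esub> ?h = ?h"
  proof -
    have "e \<otimes>\<^bsub>Mn\<^esub> ?h = (r \<otimes>\<^bsub>Mn\<^esub> l) \<otimes>\<^bsub>Mn\<^esub> ?h" using rl(4) by simp
    also have "\<dots> = r \<otimes>\<^bsub>Mn\<^esub> ((l \<otimes>\<^bsub>Mn\<^esub> r) \<otimes>\<^bsub>Mn\<^esub> (?X \<otimes>\<^bsub>Mn\<^esub> l))" using rc lc' xc by (simp add: as)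
    also have "\<dots> = ?h" using rl(3) rc lc' xc by (simp add: as)
    finally show ?thesis .
  qed
  have he2: "?h \<otimes>\<^bsub>Mn\<^esub> e = ?h"
  proof -
    have "?h \<otimes>\<^bsub>Mn\<^esub> e = ?h \<otimes>\<^bsub>Mn\<^esub> (r \<otimes>\<^bsub>Mn\<^esub> l)" using rl(4) by simp
    also have "\<dots> = r \<otimes>\<^bsub>Mn\<^esub> (?X \<otimes>\<^bsub>Mn\<^esub> ((l \<otimes>\<^bsub>Mn\<^esub> r) \<otimes>\<^bsub>Mn\<^esub> l))" using rc lc' xc by (simp add: as)
    also have "\<dots> = ?h" using rl(3) rc lc' xc by (simp add: as)
    finally show ?thesis .
  qed
  have hh: "?h \<otimes>\<^bsub>Mn\<^esub> ?h = e"
  proof -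
    have "?h \<otimes>\<^bsub>Mn\<^esub> ?h = r \<otimes>\<^bsub>Mn\<^esub> (?X \<otimes>\<^bsub>Mn\<^esub> ((l \<otimes>\<^bsub>Mn\<^esub> r) \<otimes>\<^bsub>Mn\<^esub> (?X \<otimes>\<^bsub>Mn\<^esub> l)))"
      using rc lc' xc by (simp add: as)
    also have "\<dots> = r \<otimes>\<^bsub>Mn\<^esub> ((?X \<otimes>\<^bsub>Mn\<^esub> ?X) \<otimes>\<^bsub>Mn\<^esub> l)" using rl(3) rc lc' xc by (simp add: as)
    also have "\<dots> = r \<otimes>\<^bsub>Mn\<^esub> l" using xN_sq lc' by simp
    finally show ?thesis using rl(4) by simp
  qed
  have hH: "?h \<in> carrier ?H" unfolding CH_iff using hc he1 he2 hh by blast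
  have "phi ?h = {Suc K}"
  proof -
    have "l \<otimes>\<^bsub>Mn\<^esub> ?h \<otimes>\<^bsub>Mn\<^esub> r = (l \<otimes>\<^bsub>Mn\<^esub> r) \<otimes>\<^bsub>Mn\<^esub> (?X \<otimes>\<^bsub>Mn\<^esub> (l \<otimes>\<^bsub>Mn\<^esub> r))"
      using rc lc' xc by (simp add: as)
    also have "\<dots> = ?X" using rl(3) xc by simp
    finally show ?thesis unfolding phi_def using del_xN by simp
  qed
  moreover have "phi ?h \<subseteq> {..K}" using gen[of ?h] hH S(3) by simp
  ultimately show False by simp
qed

theorem mainTheorem1:
  shows "\<exists>M :: nat monoid. context_free_monoid M \<and>
           (\<forall>e\<in>carrier M. e \<otimes>\<^bsub>M\<^esub> e = e \<longrightarrow>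
              \<not> finitely_generated_group (max_subgroup M e))"
  using cf_Mn nfg by blast

end
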